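(* Consider a neutral evolutionary model on $N$ sites given by a replacement rule $p$ satisfying the fixation assumption described in the context, with replacement probabilities $e_{ij}$, birth rates $b_i$, death rates $d_i$, total birth rate $B>0$, site-specific fixation probabilities $\rho_i$, overall fixation probability $\rho=\frac{1}{B}\sum_{i=1}^N d_i\rho_i$ and molecular clock rate $K=Nu\rho$ (for a mutation probability $u>0$ per reproduction). If the birth rates $b_i$ are constant over all sites $i=1,\ldots,N$, then $\rho\le 1/N$, and consequently $K\le u$, with equality if and only if the death rates $d_i$ are also constant over all sites.
   Context: There are $N$ sites $1,\ldots,N$, each always occupied by one individual of type M (mutant) or R (resident); a state is $\mathbf{s}\in\{\mathrm{M},\mathrm{R}\}^N$. A replacement event is a pair $(R,\alpha)$ with $R\subseteq\{1,\ldots,N\}$ and $\alpha:R\to\{1,\ldots,N\}$. A replacement rule is a probability distribution $p(R,\alpha)$ on replacement events, independent of the state. The evolutionary Markov chain: at each time-step an event $(R,\alpha)$ is drawn with probability $p(R,\alpha)$ and the new state is $s_i'=s_i$ if $i\notin R$, $s_i'=s_{\alpha(i)}$ if $i\in R$. Fixation assumption: there exist a site $i$ and a finite sequence of replacement events, each of positive probability, such that if these events occur consecutively (from any initial state) every site ends up carrying the type initially at site $i$. Define $e_{ij}=\sum_{(R,\alpha):\, j\in R,\ \alpha(j)=i}p(R,\alpha)$, $b_i=\sum_j e_{ij}$, $d_i=\sum_j e_{ji}$, $B=\sum_{i,j}e_{ij}$. The site-specific fixation probability $\rho_i$ is the probability that the chain started from the state with M at site $i$ and R elsewhere is eventually absorbed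 in $(\mathrm{M},\ldots,\mathrm{M})$. *)

theory Defs
  imports "HOL-Probability.Probability"
begin

text \<open>Sites are the elements of a finite type 'a (so N = CARD('a)).
  A state assigns to every site a type; True = M (mutant), False = R (resident).
  A replacement event is a pair (R, alpha) with R a set of sites and alpha a map
  on sites (only its values on R matter).\<close>

type_synonym 'a state = "'a \<Rightarrow> bool"
type_synonym 'a event = "'a set \<times> ('a \<Rightarrow> 'a)"

definition step :: "'a event \<Rightarrow> 'a state \<Rightarrow> 'a state" where
  "step e s = (\<lambda>i. if i \<in> fst e then s (snd e i) else s i)"

definition fixation_assumption :: "'a event pmf \<Rightarrow> bool" where
  "fixation_assumption p \<longleftrightarrow>
     (\<exists>i evs. (\<forall>e\<in>set evs. pmf p e > 0) \<and>
              (\<forall>s. fold step evs s = (\<lambda>_. s i)))"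

definition repl_prob :: "'a event pmf \<Rightarrow> 'a \<Rightarrow> 'a \<Rightarrow> real" where
  "repl_prob p i j = measure_pmf.prob p {e. j \<in> fst e \<and> snd e j = i}"

definition birth_rate :: "'a::finite event pmf \<Rightarrow> 'a \<Rightarrow> real" where
  "birth_rate p i = (\<Sum>j\<in>UNIV. repl_prob p i j)"

definition death_rate :: "'a::finite event pmf \<Rightarrow> 'a \<Rightarrow> real" where
  "death_rate p i = (\<Sum>j\<in>UNIV. repl_prob p j i)"

definition total_birth :: "'a::finite event pmf \<Rightarrow> real" where
  "total_birth p = (\<Sum>i\<in>UNIV. \<Sum>j\<in>UNIV. repl_prob p i j)"

primrec traj :: "'a state \<Rightarrow> 'a event stream \<Rightarrow> nat \<Rightarrow> 'a state" where
  "traj s \<omega> 0 = s"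
| "traj s \<omega> (Suc n) = step (\<omega> !! n) (traj s \<omega> n)"

definition fix_prob_site :: "'a event pmf \<Rightarrow> 'a \<Rightarrow> real" where
  "fix_prob_site p i =
     measure (stream_space (measure_pmf p))
       {\<omega> \<in> space (stream_space (measure_pmf p)).
          \<exists>n. \<forall>m\<ge>n. traj (\<lambda>j. j = i) \<omega> m = (\<lambda>_. True)}"

definition fix_prob :: "'a::finite event pmf \<Rightarrow> real" where
  "fix_prob p = (\<Sum>i\<in>UNIV. death_rate p i * fix_prob_site p i) / total_birth p"

definition clock_rate :: "'a::finite event pmf \<Rightarrow> real \<Rightarrow> real" where
  "clock_rate p u = real CARD('a) * u * fix_prob p"

end

theory Submission
  imports Defs
begin


definition gmap :: "'a event \<Rightarrow> 'a \<Rightarrow> 'a" where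
  "gmap e j = (if j \<in> fst e then snd e j else j)"

lemma step_gmap: "step e s = s \<circ> gmap e"
  by (auto simp: step_def gmap_def fun_eq_iff)

primrec G :: "'a event stream \<Rightarrow> nat \<Rightarrow> 'a \<Rightarrow> 'a" where
  "G \<omega> 0 = id"
| "G \<omega> (Suc n) = G \<omega> n \<circ> gmap (\<omega> !! n)"

lemma traj_G: "traj s \<omega> n = s \<circ> G \<omega> n"
  by (induction n) (auto simp: step_gmap)

lemma G_Cons: "G (x ## \<omega>) (Suc n) = gmap x \<circ> G \<omega> n"
proof (induction n)
  case 0
  then show ?case by simp
next
  case (Suc n)
  have "G (x ## \<omega>) (Suc (Suc n)) = G (x ## \<omega>) (Suc n) \<circ> gmap ((x ## \<omega>) !! Suc n)"
    by (rule G.simps(2))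
  also have "\<dots> = (gmap x \<circ> G \<omega> n) \<circ> gmap (\<omega> !! n)"
    by (simp only: Suc.IH snth_Stream nat.case)
  finally show ?case by (simp add: comp_assoc)
qed

lemma G_add: "G \<omega> (n + m) = G \<omega> n \<circ> G (sdrop n \<omega>) m"
  by (induction m) (auto simp: sdrop_snth)

lemma G_prefix: "n \<le> length xs \<Longrightarrow> G (xs @- \<omega>) n = G (xs @- \<omega>') n"
  by (induction n) (auto simp: shift_snth_less)

lemma G_fold: "fold step evs s = s \<circ> G (evs @- \<omega>) (length evs)"
proof (induction evs arbitrary: s \<omega> rule: rev_induct)
  case Nil
  then show ?case by simp
next
  case (snoc x xs)
  have "(xs @ [x]) @- \<omega> = xs @- (x ## \<omega>)" by simp
  moreover have "(xs @- (x ## \<omega>)) !! length xs = x" by simp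
  moreover have "G (xs @- (x ## \<omega>)) (length xs) = G (xs @- \<omega>) (length xs)"
    by (rule G_prefix) simp
  ultimately show ?case using snoc[of s \<omega>]
    by (simp add: step_gmap) 
qed

lemma measurable_G[measurable]:
  "(\<lambda>\<omega>. G \<omega> n) \<in> measurable (stream_space (measure_pmf (p::('a::finite) event pmf))) (count_space UNIV)"
proof (induction n)
  case 0
  then show ?case by simp
next
  case (Suc n)
  have "(\<lambda>\<omega>. (\<lambda>f \<omega>. f \<circ> gmap (\<omega> !! n)) (G \<omega> n) \<omega>) \<in> measurable (stream_space (measure_pmf p)) (count_space UNIV)"
  proof (rule measurable_compose_countable'[where I=UNIV and f="\<lambda>h \<omega>. h \<circ> gmap (\<omega> !! n)" and g="\<lambda>\<omega>. G \<omega> n"])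
    fix f :: "'a \<Rightarrow> 'a"
    show "(\<lambda>\<omega>. f \<circ> gmap (\<omega> !! n)) \<in> measurable (stream_space (measure_pmf p)) (count_space UNIV)"
    proof -
      have "(\<lambda>e. f \<circ> gmap e) \<in> measurable (measure_pmf p) (count_space UNIV)" by simp
      from measurable_compose[OF measurable_snth this] show ?thesis .
    qed
  next
    show "(\<lambda>\<omega>. G \<omega> n) \<in> measurable (stream_space (measure_pmf p)) (count_space UNIV)" by (rule Suc)
  next
    show "countable (UNIV :: ('a \<Rightarrow> 'a) set)" by (rule countable_finite) simp
  qed
  then show ?case unfolding G.simps .
qed




abbreviation SS :: "'a event pmf \<Rightarrow> 'a event stream measure" where
  "SS p \<equiv> stream_space (measure_pmf p)"

lemma SS_prob: "prob_space (SS p)"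
  by (rule prob_space.prob_space_stream_space[OF prob_space_measure_pmf])

lemma space_SS[simp]: "space (SS p) = UNIV"
  by (simp add: space_stream_space)

lemma meas_Cons: "(\<lambda>\<omega>. x ## \<omega>) \<in> measurable (SS p) (SS p)"
  by measurable

lemma sets_Cons: "A \<in> sets (SS p) \<Longrightarrow> {\<omega>. x ## \<omega> \<in> A} \<in> sets (SS p)"
  using measurable_sets[OF meas_Cons[of x p], of A] by (simp add: vimage_def)

lemma decomp:
  fixes p :: "('a::finite) event pmf"
  assumes A: "A \<in> sets (SS p)"
  shows "measure (SS p) A = (\<Sum>x\<in>UNIV. pmf p x * measure (SS p) {\<omega>. x ## \<omega> \<in> A})"
proof -
  interpret S: prob_space "SS p" by (rule SS_prob)
  have "ennreal (measure (SS p) A) = emeasure (SS p) A"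
    by (simp add: S.emeasure_eq_measure)
  also have "\<dots> = (\<integral>\<^sup>+t. emeasure (SS p) {x\<in>space (SS p). t ## x \<in> A} \<partial>measure_pmf p)"
    by (rule prob_space.emeasure_stream_space[OF prob_space_measure_pmf A])
  also have "\<dots> = (\<integral>\<^sup>+t. ennreal (pmf p t * measure (SS p) {\<omega>. t ## \<omega> \<in> A}) \<partial>count_space UNIV)"
    by (simp add: nn_integral_measure_pmf S.emeasure_eq_measure ennreal_mult)
  also have "\<dots> = (\<Sum>t\<in>UNIV. ennreal (pmf p t * measure (SS p) {\<omega>. t ## \<omega> \<in> A}))"
    by (simp add: nn_integral_count_space_finite)
  also have "\<dots> = ennreal (\<Sum>t\<in>UNIV. pmf p t * measure (SS p) {\<omega>. t ## \<omega> \<in> A})"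
    by (rule sum_ennreal) simp
  finally show ?thesis
    by (subst (asm) ennreal_inj) (auto intro: sum_nonneg)
qed

lemma sets_G: "{\<omega>. P (G \<omega> n)} \<in> sets (SS (p::('a::finite) event pmf))"
  using measurable_sets[OF measurable_G[of n p], of "{f. P f}"] by (simp add: vimage_def)

definition C :: "'a \<Rightarrow> 'a event stream set" where
  "C i = {\<omega>. \<exists>n. \<forall>j. G \<omega> n j = i}"

lemma sets_C: "C i \<in> sets (SS (p::('a::finite) event pmf))"
proof -
  have "{\<omega>\<in>space (SS p). \<exists>n. \<forall>j. G \<omega> n j = i} \<in> sets (SS p)"
    by (rule sets.sets_Collect_countable_Ex) (use sets_G[of "\<lambda>f. \<forall>j. f j = i"] in simp)
  then show ?thesis by (simp add: C_def)
qed

lemma const_stays: "\<forall>j. G \<omega> n j = i \<Longrightarrow> G \<omega> (n + m) j = i"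
  by (simp add: G_add)

lemma C_disj: "i \<noteq> k \<Longrightarrow> C i \<inter> C k = {}"
proof (rule ccontr)
  assume "i \<noteq> k" "C i \<inter> C k \<noteq> {}"
  then obtain \<omega> n m where "\<forall>j. G \<omega> n j = i" "\<forall>j. G \<omega> m j = k" by (auto simp: C_def)
  then have "G \<omega> (n + m) undefined = i" "G \<omega> (m + n) undefined = k" by (auto intro: const_stays)
  then show False using \<open>i \<noteq> k\<close> by (simp add: add.commute)
qed

lemma fix_prob_site_C:
  "fix_prob_site p i = measure (SS p) (C i)"
proof -
  have "{\<omega> \<in> space (SS p). \<exists>n. \<forall>m\<ge>n. traj (\<lambda>j. j = i) \<omega> m = (\<lambda>_. True)} = C i"
  proof (intro set_eqI iffI)
    fix \<omega> assume "\<omega> \<in> {\<omega> \<in> space (SS p). \<exists>n. \<forall>m\<ge>n. traj (\<lambda>j. j = i) \<omega> m = (\<lambda>_. True)}"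
    then obtain n where "traj (\<lambda>j. j = i) \<omega> n = (\<lambda>_. True)" by auto
    then show "\<omega> \<in> C i" by (auto simp: C_def traj_G fun_eq_iff)
  next
    fix \<omega> assume "\<omega> \<in> C i"
    then obtain n where n: "\<forall>j. G \<omega> n j = i" by (auto simp: C_def)
    have "traj (\<lambda>j. j = i) \<omega> m = (\<lambda>_. True)" if "m \<ge> n" for m
    proof -
      obtain k where "m = n + k" using \<open>m \<ge> n\<close> le_Suc_ex by blast
      then show ?thesis using const_stays[OF n] by (auto simp: traj_G fun_eq_iff)
    qed
    then show "\<omega> \<in> {\<omega> \<in> space (SS p). \<exists>n. \<forall>m\<ge>n. traj (\<lambda>j. j = i) \<omega> m = (\<lambda>_. True)}"
      by auto
  qed
  then show ?thesis by (simp add: fix_prob_site_def)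
qed




context fixes p :: "('a::finite) event pmf" begin

abbreviation \<rho> :: "'a \<Rightarrow> real" where "\<rho> i \<equiv> measure (SS p) (C i)"

lemma rho_nonneg: "\<rho> i \<ge> 0" by simp

lemma disj_C: "disjoint_family_on C A"
proof (unfold disjoint_family_on_def, intro ballI impI)
  fix m n assume "m \<noteq> n" then show "C m \<inter> C n = {}" by (rule C_disj)
qed

lemma sum_rho_sub: "(\<Sum>i\<in>A. \<rho> i) = measure (SS p) (\<Union>i\<in>A. C i)"
proof -
  interpret S: prob_space "SS p" by (rule SS_prob)
  show ?thesis
    by (rule S.finite_measure_finite_Union[symmetric]) (auto simp: sets_C disj_C)
qed

lemma sum_rho_le: "(\<Sum>i\<in>UNIV. \<rho> i) \<le> 1"
proof -
  interpret S: prob_space "SS p" by (rule SS_prob)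
  show ?thesis by (simp add: sum_rho_sub)
qed

lemma Cons_C: "\<omega> \<in> C k \<Longrightarrow> x ## \<omega> \<in> C (gmap x k)"
proof -
  assume "\<omega> \<in> C k"
  then obtain n where "\<forall>j. G \<omega> n j = k" by (auto simp: C_def)
  then have "G (x ## \<omega>) (Suc n) j = gmap x k" for j by (simp only: G_Cons comp_apply)
  then show ?thesis unfolding C_def by blast
qed

lemma harm_ineq:
  "\<rho> i \<ge> (\<Sum>x\<in>UNIV. pmf p x * (\<Sum>k\<in>{k. gmap x k = i}. \<rho> k))"
proof -
  interpret S: prob_space "SS p" by (rule SS_prob)
  have "\<rho> i = (\<Sum>x\<in>UNIV. pmf p x * measure (SS p) {\<omega>. x ## \<omega> \<in> C i})"
    by (rule decomp[OF sets_C])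
  also have "\<dots> \<ge> (\<Sum>x\<in>UNIV. pmf p x * (\<Sum>k\<in>{k. gmap x k = i}. \<rho> k))"
  proof (rule sum_mono, rule mult_left_mono)
    fix x
    have "(\<Sum>k\<in>{k. gmap x k = i}. \<rho> k) = measure (SS p) (\<Union>k\<in>{k. gmap x k = i}. C k)"
      by (rule sum_rho_sub)
    also have "\<dots> \<le> measure (SS p) {\<omega>. x ## \<omega> \<in> C i}"
      by (rule S.finite_measure_mono) (auto intro: sets_Cons sets_C dest: Cons_C)
    finally show "(\<Sum>k\<in>{k. gmap x k = i}. \<rho> k) \<le> measure (SS p) {\<omega>. x ## \<omega> \<in> C i}" .
  qed simp
  finally show ?thesis .
qed

end


context fixes p :: "('a::finite) event pmf" begin
lemma prob_eq: "measure_pmf.prob p A = (\<Sum>x\<in>UNIV. if x \<in> A then pmf p x else 0)"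
proof -
  have "measure_pmf.prob p A = sum (pmf p) A"
    by (rule measure_measure_pmf_finite) simp
  also have "\<dots> = sum (pmf p) (UNIV \<inter> A)" by simp
  also have "\<dots> = (\<Sum>x\<in>UNIV. if x \<in> A then pmf p x else 0)"
    by (rule sum.inter_restrict) simp
  finally show ?thesis .
qed

lemma death_eq: "death_rate p i = (\<Sum>x\<in>UNIV. if i \<in> fst x then pmf p x else 0)"
proof -
  have "death_rate p i = (\<Sum>j\<in>UNIV. \<Sum>x\<in>UNIV. if i \<in> fst x \<and> snd x i = j then pmf p x else 0)"
    unfolding death_rate_def repl_prob_def prob_eq by simp
  also have "\<dots> = (\<Sum>x\<in>UNIV. \<Sum>j\<in>UNIV. if i \<in> fst x \<and> snd x i = j then pmf p x else 0)"
    by (rule sum.swap)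
  also have "\<dots> = (\<Sum>x\<in>UNIV. if i \<in> fst x then pmf p x else 0)"
    by (rule sum.cong[OF refl]) (cases "i \<in> fst x"; simp)
  finally show ?thesis .
qed

lemma sum_pmf1: "(\<Sum>x\<in>UNIV. pmf p x) = 1"
  by (rule sum_pmf_eq_1) auto

lemma gmap_prob:
  "(\<Sum>x\<in>UNIV. if gmap x k = i then pmf p x else 0)
   = repl_prob p i k + (if k = i then 1 - death_rate p i else 0)"
proof -
  have "(\<Sum>x\<in>UNIV. if gmap x k = i then pmf p x else 0)
     = (\<Sum>x\<in>UNIV. (if k \<in> fst x \<and> snd x k = i then pmf p x else 0)
                 + (if k = i then pmf p x - (if i \<in> fst x then pmf p x else 0) else 0))"
    by (rule sum.cong[OF refl]) (auto simp: gmap_def)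
  also have "\<dots> = (\<Sum>x\<in>UNIV. if k \<in> fst x \<and> snd x k = i then pmf p x else 0)
                 + (\<Sum>x\<in>UNIV. if k = i then pmf p x - (if i \<in> fst x then pmf p x else 0) else 0)"
    by (rule sum.distrib)
  also have "(\<Sum>x\<in>UNIV. if k \<in> fst x \<and> snd x k = i then pmf p x else 0) = repl_prob p i k"
    unfolding repl_prob_def prob_eq by simp
  also have "(\<Sum>x\<in>UNIV. if k = i then pmf p x - (if i \<in> fst x then pmf p x else 0) else 0)
       = (if k = i then 1 - death_rate p i else 0)"
    unfolding death_eq by (simp add: sum_subtractf sum_pmf1)
  finally show ?thesis .
qed

lemma balance_ge:
  "death_rate p i * \<rho> p i \<ge> (\<Sum>k\<in>UNIV. repl_prob p i k * \<rho> p k)"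
proof -
  have "(\<Sum>x\<in>UNIV. pmf p x * (\<Sum>k\<in>{k. gmap x k = i}. \<rho> p k))
     = (\<Sum>x\<in>UNIV. \<Sum>k\<in>UNIV. if gmap x k = i then pmf p x * \<rho> p k else 0)"
  proof (rule sum.cong[OF refl])
    fix x
    have "(\<Sum>k\<in>{k. gmap x k = i}. \<rho> p k) = (\<Sum>k\<in>UNIV \<inter> {k. gmap x k = i}. \<rho> p k)" by simp
    also have "\<dots> = (\<Sum>k\<in>UNIV. if k \<in> {k. gmap x k = i} then \<rho> p k else 0)"
      by (rule sum.inter_restrict) simp
    finally show "pmf p x * (\<Sum>k\<in>{k. gmap x k = i}. \<rho> p k) = (\<Sum>k\<in>UNIV. if gmap x k = i then pmf p x * \<rho> p k else 0)"
      by (simp add: sum_distrib_left if_distrib[of "\<lambda>t. pmf p x * t"] cong: if_cong)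
  qed
  also have "\<dots> = (\<Sum>k\<in>UNIV. \<Sum>x\<in>UNIV. if gmap x k = i then pmf p x * \<rho> p k else 0)"
    by (rule sum.swap)
  also have "\<dots> = (\<Sum>k\<in>UNIV. \<rho> p k * (\<Sum>x\<in>UNIV. if gmap x k = i then pmf p x else 0))"
    by (rule sum.cong[OF refl]) (simp add: sum_distrib_left if_distrib[of "\<lambda>t. \<rho> p _ * t"] mult.commute cong: if_cong)
  also have "\<dots> = (\<Sum>k\<in>UNIV. repl_prob p i k * \<rho> p k + (if k = i then \<rho> p i * (1 - death_rate p i) else 0))"
    by (rule sum.cong[OF refl]) (auto simp: gmap_prob algebra_simps)
  also have "\<dots> = (\<Sum>k\<in>UNIV. repl_prob p i k * \<rho> p k) + \<rho> p i * (1 - death_rate p i)"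
    by (simp add: sum.distrib)
  finally show ?thesis using harm_ineq[of p i] by (simp add: algebra_simps)
qed

lemma balance:
  "death_rate p i * \<rho> p i = (\<Sum>k\<in>UNIV. repl_prob p i k * \<rho> p k)"
proof -
  let ?f = "\<lambda>i. death_rate p i * \<rho> p i - (\<Sum>k\<in>UNIV. repl_prob p i k * \<rho> p k)"
  have "(\<Sum>i\<in>UNIV. ?f i) = (\<Sum>i\<in>UNIV. death_rate p i * \<rho> p i) - (\<Sum>i\<in>UNIV. \<Sum>k\<in>UNIV. repl_prob p i k * \<rho> p k)"
    by (rule sum_subtractf)
  also have "(\<Sum>i\<in>UNIV. \<Sum>k\<in>UNIV. repl_prob p i k * \<rho> p k) = (\<Sum>k\<in>UNIV. \<Sum>i\<in>UNIV. repl_prob p i k * \<rho> p k)"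
    by (rule sum.swap)
  also have "\<dots> = (\<Sum>k\<in>UNIV. death_rate p k * \<rho> p k)"
    unfolding death_rate_def by (simp add: sum_distrib_right)
  finally have "(\<Sum>i\<in>UNIV. ?f i) = 0" by simp
  moreover have "\<forall>i\<in>UNIV. ?f i \<ge> 0" using balance_ge by simp
  ultimately have "\<forall>i\<in>UNIV. ?f i = 0" using sum_nonneg_eq_0_iff[of UNIV ?f] by simp
  then show ?thesis by simp
qed

lemma tail_N: "x ## \<omega> \<in> - (\<Union>i. C i) \<Longrightarrow> \<omega> \<in> - (\<Union>i. C i)"
proof (rule ccontr)
  assume a: "x ## \<omega> \<in> - (\<Union>i. C i)" and "\<omega> \<notin> - (\<Union>i. C i)"
  then obtain k where "\<omega> \<in> C k" by auto
  then have "x ## \<omega> \<in> C (gmap x k)" by (rule Cons_C)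
  with a show False by auto
qed

lemma sets_H: "(\<Union>i. C i) \<in> sets (SS p)"
proof (rule sets.finite_UN)
  show "finite (UNIV :: 'a set)" by simp
  show "\<And>i. i \<in> UNIV \<Longrightarrow> C i \<in> sets (SS p)" by (rule sets_C)
qed

lemma list_bound:
  "A \<in> sets (SS p) \<Longrightarrow> A \<subseteq> - (\<Union>i. C i) \<Longrightarrow> (\<forall>\<omega>. ys @- \<omega> \<notin> A) \<Longrightarrow>
   measure (SS p) A \<le> (1 - prod_list (map (pmf p) ys)) * measure (SS p) (- (\<Union>i. C i))"
proof (induction ys arbitrary: A)
  case Nil
  then have "A = {}" by auto
  then show ?case by simp
next
  case (Cons y zs)
  interpret S: prob_space "SS p" by (rule SS_prob)
  let ?N = "- (\<Union>i. C i)"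
  have N: "?N \<in> sets (SS p)"
  proof -
    have "space (SS p) - (\<Union>i. C i) \<in> sets (SS p)" by (rule sets.compl_sets[OF sets_H])
    then show ?thesis by (simp add: Compl_eq_Diff_UNIV)
  qed
  let ?A = "\<lambda>x. {\<omega>. x ## \<omega> \<in> A}"
  have Ax: "?A x \<in> sets (SS p)" for x using sets_Cons[OF Cons.prems(1)] .
  have AxN: "?A x \<subseteq> ?N" for x
  proof
    fix \<omega> assume "\<omega> \<in> ?A x"
    then have "x ## \<omega> \<in> ?N" using Cons.prems(2) by auto
    then show "\<omega> \<in> ?N" by (rule tail_N)
  qed
  have le1: "measure (SS p) (?A x) \<le> measure (SS p) ?N" for x
    by (rule S.finite_measure_mono[OF AxN N])
  have le2: "measure (SS p) (?A y) \<le> (1 - prod_list (map (pmf p) zs)) * measure (SS p) ?N"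
    by (rule Cons.IH[OF Ax AxN]) (use Cons.prems(3) in auto)
  have "measure (SS p) A = (\<Sum>x\<in>UNIV. pmf p x * measure (SS p) (?A x))"
    by (rule decomp[OF Cons.prems(1)])
  also have "\<dots> = pmf p y * measure (SS p) (?A y) + (\<Sum>x\<in>UNIV - {y}. pmf p x * measure (SS p) (?A x))"
    by (rule sum.remove) auto
  also have "\<dots> \<le> pmf p y * ((1 - prod_list (map (pmf p) zs)) * measure (SS p) ?N) + (\<Sum>x\<in>UNIV - {y}. pmf p x * measure (SS p) ?N)"
    by (intro add_mono mult_left_mono sum_mono le1 le2) auto
  also have "(\<Sum>x\<in>UNIV - {y}. pmf p x * measure (SS p) ?N) = (1 - pmf p y) * measure (SS p) ?N"
  proof -
    have "(\<Sum>x\<in>UNIV. pmf p x) = pmf p y + (\<Sum>x\<in>UNIV - {y}. pmf p x)"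
      by (rule sum.remove) auto
    then have "(\<Sum>x\<in>UNIV - {y}. pmf p x) = 1 - pmf p y" using sum_pmf1 by simp
    then show ?thesis by (simp add: sum_distrib_right[symmetric])
  qed
  finally show ?case by (simp add: algebra_simps)
qed

lemma sum_rho_1:
  assumes "fixation_assumption p"
  shows "(\<Sum>i\<in>UNIV. \<rho> p i) = 1"
proof -
  interpret S: prob_space "SS p" by (rule SS_prob)
  obtain i0 evs where pos: "\<forall>e\<in>set evs. pmf p e > 0" and fx: "\<forall>s. fold step evs s = (\<lambda>_. s i0)"
    using assms unfolding fixation_assumption_def by blast
  let ?N = "- (\<Union>i. C i)"
  have N: "?N \<in> sets (SS p)"
  proof -
    have "space (SS p) - (\<Union>i. C i) \<in> sets (SS p)" by (rule sets.compl_sets[OF sets_H])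
    then show ?thesis by (simp add: Compl_eq_Diff_UNIV)
  qed
  have notN: "evs @- \<omega> \<notin> ?N" for \<omega>
  proof -
    have "(\<lambda>j. j = i0) \<circ> G (evs @- \<omega>) (length evs) = (\<lambda>_. True)"
      using fx G_fold[of evs "\<lambda>j. j = i0" \<omega>] by simp
    then have "\<forall>j. G (evs @- \<omega>) (length evs) j = i0" by (simp add: fun_eq_iff)
    then show ?thesis unfolding C_def by blast
  qed
  have q: "prod_list (map (pmf p) evs) > 0"
    using pos by (induction evs) auto
  have "measure (SS p) ?N \<le> (1 - prod_list (map (pmf p) evs)) * measure (SS p) ?N"
    by (rule list_bound[OF N subset_refl]) (use notN in blast)
  then have "prod_list (map (pmf p) evs) * measure (SS p) ?N \<le> 0" by (simp add: algebra_simps)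
  then have "measure (SS p) ?N \<le> 0" using q by (simp add: mult_le_0_iff)
  then have "measure (SS p) ?N = 0" using measure_nonneg[of "SS p" ?N] by linarith
  moreover have "measure (SS p) ?N = 1 - measure (SS p) (\<Union>i. C i)"
    using S.prob_compl[OF sets_H] by (simp add: Compl_eq_Diff_UNIV)
  ultimately have "measure (SS p) (\<Union>i. C i) = 1" by simp
  then show ?thesis using sum_rho_sub[of p UNIV] by simp
qed
end



lemma term_ineq:
  fixes e :: "'a::finite \<Rightarrow> 'a \<Rightarrow> real" and \<pi> :: "'a \<Rightarrow> real"
  assumes e0: "\<And>i j. e i j \<ge> 0" and p0: "\<And>i. \<pi> i \<ge> 0"
    and bal: "\<And>i. (\<Sum>j\<in>UNIV. e j i) * \<pi> i = (\<Sum>j\<in>UNIV. e i j * \<pi> j)"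
  shows "e i j * (\<pi> i - \<pi> j) - (e i j * \<pi> j * ln (\<pi> i) - e i j * \<pi> j * ln (\<pi> j)) \<ge> 0"
proof (cases "\<pi> j = 0")
  case True
  then show ?thesis using e0[of i j] p0[of i] by simp
next
  case False
  then have pj: "\<pi> j > 0" using p0[of j] by simp
  show ?thesis
  proof (cases "\<pi> i = 0")
    case True
    have "(\<Sum>k\<in>UNIV. e i k * \<pi> k) = 0" using bal[of i] True by simp
    moreover have "\<forall>k\<in>UNIV. e i k * \<pi> k \<ge> 0" using e0 p0 by simp
    ultimately have "e i j * \<pi> j = 0" using sum_nonneg_eq_0_iff[of UNIV "\<lambda>k. e i k * \<pi> k"] by simp
    then have "e i j = 0" using pj by simp
    then show ?thesis by simp
  next
    case False
    then have pi: "\<pi> i > 0" using p0[of i] by simp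
    have "ln (\<pi> i / \<pi> j) \<le> \<pi> i / \<pi> j - 1" by (rule ln_le_minus_one) (use pi pj in simp)
    then have "\<pi> j * ln (\<pi> i / \<pi> j) \<le> \<pi> j * (\<pi> i / \<pi> j - 1)" using pj by (simp add: mult_left_mono)
    then have "\<pi> j * (ln (\<pi> i) - ln (\<pi> j)) \<le> \<pi> i - \<pi> j" using pi pj by (simp add: ln_div algebra_simps)
    then have "e i j * (\<pi> j * (ln (\<pi> i) - ln (\<pi> j))) \<le> e i j * (\<pi> i - \<pi> j)" using e0[of i j] by (rule mult_left_mono)
    then show ?thesis by (simp add: algebra_simps)
  qed
qed

lemma alg_main:
  fixes e :: "'a::finite \<Rightarrow> 'a \<Rightarrow> real" and \<pi> :: "'a \<Rightarrow> real"
  assumes e0: "\<And>i j. e i j \<ge> 0" and p0: "\<And>i. \<pi> i \<ge> 0"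
    and bal: "\<And>i. (\<Sum>j\<in>UNIV. e j i) * \<pi> i = (\<Sum>j\<in>UNIV. e i j * \<pi> j)"
  shows "(\<Sum>i\<in>UNIV. \<Sum>j\<in>UNIV. e i j * (\<pi> i - \<pi> j)) =
         (\<Sum>i\<in>UNIV. \<Sum>j\<in>UNIV. e i j * (\<pi> i - \<pi> j) - (e i j * \<pi> j * ln (\<pi> i) - e i j * \<pi> j * ln (\<pi> j)))"
proof -
  have "(\<Sum>i\<in>UNIV. \<Sum>j\<in>UNIV. e i j * \<pi> j * ln (\<pi> i)) = (\<Sum>i\<in>UNIV. ln (\<pi> i) * (\<Sum>j\<in>UNIV. e i j * \<pi> j))"
    by (simp add: sum_distrib_left algebra_simps)
  also have "\<dots> = (\<Sum>i\<in>UNIV. ln (\<pi> i) * ((\<Sum>j\<in>UNIV. e j i) * \<pi> i))"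
    by (simp add: bal)
  also have "\<dots> = (\<Sum>i\<in>UNIV. \<Sum>j\<in>UNIV. e j i * \<pi> i * ln (\<pi> i))"
    by (simp add: sum_distrib_left sum_distrib_right algebra_simps)
  also have "\<dots> = (\<Sum>j\<in>UNIV. \<Sum>i\<in>UNIV. e j i * \<pi> i * ln (\<pi> i))"
    by (rule sum.swap)
  finally have eq: "(\<Sum>i\<in>UNIV. \<Sum>j\<in>UNIV. e i j * \<pi> j * ln (\<pi> i)) = (\<Sum>i\<in>UNIV. \<Sum>j\<in>UNIV. e i j * \<pi> j * ln (\<pi> j))" .
  show ?thesis
    by (simp add: sum_subtractf eq)
qed


lemma tight:
  fixes e :: "'a::finite \<Rightarrow> 'a \<Rightarrow> real" and \<pi> :: "'a \<Rightarrow> real"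
  assumes e0: "\<And>i j. e i j \<ge> 0" and p0: "\<And>i. \<pi> i \<ge> 0"
    and bal: "\<And>i. (\<Sum>j\<in>UNIV. e j i) * \<pi> i = (\<Sum>j\<in>UNIV. e i j * \<pi> j)"
    and z: "(\<Sum>i\<in>UNIV. \<Sum>j\<in>UNIV. e i j * (\<pi> i - \<pi> j)) = 0"
  shows "e i j * (\<pi> i - \<pi> j) - (e i j * \<pi> j * ln (\<pi> i) - e i j * \<pi> j * ln (\<pi> j)) = 0"
proof -
  let ?s = "\<lambda>i j. e i j * (\<pi> i - \<pi> j) - (e i j * \<pi> j * ln (\<pi> i) - e i j * \<pi> j * ln (\<pi> j))"
  have s0: "\<And>i j. ?s i j \<ge> 0" by (rule term_ineq[OF e0 p0 bal])
  have "(\<Sum>i\<in>UNIV. \<Sum>j\<in>UNIV. ?s i j) = 0" using alg_main[OF e0 p0 bal] z by simp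
  moreover have "\<forall>i\<in>UNIV. (\<Sum>j\<in>UNIV. ?s i j) \<ge> 0" using s0 by (simp add: sum_nonneg)
  ultimately have "\<forall>i\<in>UNIV. (\<Sum>j\<in>UNIV. ?s i j) = 0"
    using sum_nonneg_eq_0_iff[of UNIV "\<lambda>i. \<Sum>j\<in>UNIV. ?s i j"] by simp
  then have "(\<Sum>j\<in>UNIV. ?s i j) = 0" by simp
  then show ?thesis using sum_nonneg_eq_0_iff[of UNIV "\<lambda>j. ?s i j"] s0 by simp
qed

lemma tight1:
  fixes e :: "'a::finite \<Rightarrow> 'a \<Rightarrow> real" and \<pi> :: "'a \<Rightarrow> real"
  assumes e0: "\<And>i j. e i j \<ge> 0" and p0: "\<And>i. \<pi> i \<ge> 0"
    and bal: "\<And>i. (\<Sum>j\<in>UNIV. e j i) * \<pi> i = (\<Sum>j\<in>UNIV. e i j * \<pi> j)"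
    and z: "(\<Sum>i\<in>UNIV. \<Sum>j\<in>UNIV. e i j * (\<pi> i - \<pi> j)) = 0"
    and "\<pi> j = 0"
  shows "e i j * \<pi> i = 0"
  using tight[OF e0 p0 bal z, of i j] \<open>\<pi> j = 0\<close> by simp

lemma tight2:
  fixes e :: "'a::finite \<Rightarrow> 'a \<Rightarrow> real" and \<pi> :: "'a \<Rightarrow> real"
  assumes e0: "\<And>i j. e i j \<ge> 0" and p0: "\<And>i. \<pi> i \<ge> 0"
    and bal: "\<And>i. (\<Sum>j\<in>UNIV. e j i) * \<pi> i = (\<Sum>j\<in>UNIV. e i j * \<pi> j)"
    and z: "(\<Sum>i\<in>UNIV. \<Sum>j\<in>UNIV. e i j * (\<pi> i - \<pi> j)) = 0"
    and pi: "\<pi> i > 0" and pj: "\<pi> j > 0" and eij: "e i j > 0"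
  shows "\<pi> i = \<pi> j"
proof -
  have "e i j * ((\<pi> i - \<pi> j) - \<pi> j * (ln (\<pi> i) - ln (\<pi> j))) = 0"
    using tight[OF e0 p0 bal z, of i j] by (simp add: algebra_simps)
  then have "(\<pi> i - \<pi> j) - \<pi> j * (ln (\<pi> i) - ln (\<pi> j)) = 0" using eij by simp
  then have "\<pi> j * (\<pi> i / \<pi> j - 1) = \<pi> j * ln (\<pi> i / \<pi> j)"
    using pi pj by (simp add: ln_div algebra_simps)
  then have "ln (\<pi> i / \<pi> j) = \<pi> i / \<pi> j - 1" using pj by simp
  then have "\<pi> i / \<pi> j = 1" by (rule ln_eq_minus_one[rotated]) (use pi pj in simp)
  then show ?thesis using pj by simp
qed


lemma fold_fix:
  assumes "\<forall>e\<in>set evs. step e s = s"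
  shows "fold step evs s = s"
  using assms by (induction evs) auto

lemma repl_pos:
  fixes p :: "('a::finite) event pmf"
  assumes "k \<in> fst e" 
  shows "repl_prob p (snd e k) k \<ge> pmf p e"
proof -
  have "repl_prob p (snd e k) k = (\<Sum>x\<in>UNIV. if x \<in> {x. k \<in> fst x \<and> snd x k = snd e k} then pmf p x else 0)"
    unfolding repl_prob_def by (rule prob_eq)
  also have "\<dots> \<ge> (if e \<in> {x. k \<in> fst x \<and> snd x k = snd e k} then pmf p e else 0)"
    by (rule member_le_sum) auto
  finally show ?thesis using assms by simp
qed

theorem mainTheorem3:
  fixes p :: "('a::finite) event pmf" and u :: real
  assumes "fixation_assumption p"
    and "total_birth p > 0"
    and "u > 0"
    and "\<exists>c. \<forall>i. birth_rate p i = c"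
  shows "fix_prob p \<le> 1 / real CARD('a)
         \<and> clock_rate p u \<le> u
         \<and> (fix_prob p = 1 / real CARD('a) \<longleftrightarrow> (\<exists>c. \<forall>i. death_rate p i = c))
         \<and> (clock_rate p u = u \<longleftrightarrow> (\<exists>c. \<forall>i. death_rate p i = c))"
proof -
  obtain c where bc: "\<And>i. birth_rate p i = c" using assms(4) by blast
  define e where "e = repl_prob p"
  define \<pi> where "\<pi> = \<rho> p"
  define N where "N = real CARD('a)"
  have N0: "N > 0" unfolding N_def by simp
  have e0: "\<And>i j. e i j \<ge> 0" unfolding e_def repl_prob_def by simp
  have p0: "\<And>i. \<pi> i \<ge> 0" unfolding \<pi>_def by simp
  have dd: "\<And>i. death_rate p i = (\<Sum>j\<in>UNIV. e j i)" unfolding death_rate_def e_def by simp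
  have bb: "\<And>i. (\<Sum>j\<in>UNIV. e i j) = c" using bc unfolding birth_rate_def e_def by simp
  have bal: "(\<Sum>j\<in>UNIV. e j i) * \<pi> i = (\<Sum>j\<in>UNIV. e i j * \<pi> j)" for i
    using balance[of p i] unfolding e_def \<pi>_def death_rate_def by simp
  have sig: "(\<Sum>i\<in>UNIV. \<pi> i) = 1" unfolding \<pi>_def by (rule sum_rho_1[OF assms(1)])
  have B: "total_birth p = N * c" unfolding total_birth_def N_def
    using bb unfolding e_def by simp
  have c0: "c > 0" using assms(2) B N0 by (simp add: zero_less_mult_iff)
  define Ds where "Ds = (\<Sum>i\<in>UNIV. death_rate p i * \<pi> i)"
  have fp: "fix_prob p = Ds / (N * c)"
    unfolding fix_prob_def Ds_def \<pi>_def B[symmetric] by (simp add: fix_prob_site_C)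
  have defi: "(\<Sum>i\<in>UNIV. \<Sum>j\<in>UNIV. e i j * (\<pi> i - \<pi> j)) = c - Ds"
  proof -
    have "(\<Sum>i\<in>UNIV. \<Sum>j\<in>UNIV. e i j * (\<pi> i - \<pi> j))
        = (\<Sum>i\<in>UNIV. \<Sum>j\<in>UNIV. e i j * \<pi> i) - (\<Sum>i\<in>UNIV. \<Sum>j\<in>UNIV. e i j * \<pi> j)"
      by (simp add: sum_subtractf right_diff_distrib)
    also have "(\<Sum>i\<in>UNIV. \<Sum>j\<in>UNIV. e i j * \<pi> i) = (\<Sum>i\<in>UNIV. c * \<pi> i)"
      by (simp add: sum_distrib_right[symmetric] bb)
    also have "\<dots> = c" by (simp add: sum_distrib_left[symmetric] sig)
    also have "(\<Sum>i\<in>UNIV. \<Sum>j\<in>UNIV. e i j * \<pi> j) = (\<Sum>j\<in>UNIV. \<Sum>i\<in>UNIV. e i j * \<pi> j)"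
      by (rule sum.swap)
    also have "\<dots> = Ds" unfolding Ds_def dd by (simp add: sum_distrib_right)
    finally show ?thesis .
  qed
  have defi0: "(\<Sum>i\<in>UNIV. \<Sum>j\<in>UNIV. e i j * (\<pi> i - \<pi> j)) \<ge> 0"
    unfolding alg_main[OF e0 p0 bal]
    by (intro sum_nonneg term_ineq[OF e0 p0 bal])
  have Dsc: "Ds \<le> c" using defi defi0 by simp
  have fp_le: "fix_prob p \<le> 1 / N"
    unfolding fp using Dsc c0 N0 by (simp add: field_simps)
  have fp_eq: "fix_prob p = 1 / N \<longleftrightarrow> Ds = c"
    unfolding fp using c0 N0 by (auto simp: field_simps)
  have cr: "clock_rate p u = N * u * fix_prob p" unfolding clock_rate_def N_def by simp
  have cr_le: "clock_rate p u \<le> u"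
    unfolding cr using fp_le N0 assms(3) mult_left_mono[OF fp_le, of "N * u"] by simp
  have cr_eq: "clock_rate p u = u \<longleftrightarrow> fix_prob p = 1 / N"
    unfolding cr using N0 assms(3) by (auto simp: field_simps)
  have iff: "Ds = c \<longleftrightarrow> (\<exists>c. \<forall>i. death_rate p i = c)"
  proof
    assume "\<exists>k. \<forall>i. death_rate p i = k"
    then obtain k where k: "\<And>i. death_rate p i = k" by blast
    have "N * k = (\<Sum>i\<in>UNIV. death_rate p i)" unfolding N_def by (simp add: k)
    also have "\<dots> = (\<Sum>i\<in>UNIV. \<Sum>j\<in>UNIV. e i j)" unfolding dd by (rule sum.swap)
    also have "\<dots> = N * c" unfolding N_def by (simp add: bb)
    finally have "k = c" using N0 by simp
    then show "Ds = c" unfolding Ds_def using k sig by (simp add: sum_distrib_left[symmetric])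
  next
    assume "Ds = c"
    then have z: "(\<Sum>i\<in>UNIV. \<Sum>j\<in>UNIV. e i j * (\<pi> i - \<pi> j)) = 0" using defi by simp
    obtain i0 evs where pos: "\<forall>x\<in>set evs. pmf p x > 0" and fx: "\<forall>s. fold step evs s = (\<lambda>_. s i0)"
      using assms(1) unfolding fixation_assumption_def by blast
    define s where "s = (\<lambda>k. \<pi> k \<noteq> 0)"
    have closed: "s (snd x k) = s k" if "pmf p x > 0" "k \<in> fst x" for x k
    proof -
      let ?i = "snd x k"
      have eik: "e ?i k > 0" using repl_pos[OF that(2), of p] that(1) unfolding e_def by simp
      show ?thesis
      proof (cases "\<pi> k = 0")
        case True
        then have "e ?i k * \<pi> ?i = 0" by (rule tight1[OF e0 p0 bal z])
        then show ?thesis using eik True unfolding s_def by simp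
      next
        case False
        then have pk: "\<pi> k > 0" using p0[of k] by simp
        have "\<pi> ?i \<noteq> 0"
        proof
          assume "\<pi> ?i = 0"
          then have "(\<Sum>j\<in>UNIV. e ?i j * \<pi> j) = 0" using bal[of ?i] by simp
          moreover have "e ?i k * \<pi> k \<le> (\<Sum>j\<in>UNIV. e ?i j * \<pi> j)"
            by (rule member_le_sum) (auto intro: mult_nonneg_nonneg e0 p0)
          moreover have "e ?i k * \<pi> k > 0" using eik pk by simp
          ultimately show False by simp
        qed
        then show ?thesis using False unfolding s_def by simp
      qed
    qed
    have "\<forall>x\<in>set evs. step x s = s"
      using pos closed by (auto simp: step_def fun_eq_iff)
    then have "fold step evs s = s" by (rule fold_fix)
    then have sc: "\<And>k. s k = s i0" using fx by (metis)
    have "\<exists>k0. \<pi> k0 \<noteq> 0"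
    proof (rule ccontr)
      assume "\<not> (\<exists>k0. \<pi> k0 \<noteq> 0)"
      then have "\<And>k. \<pi> k = 0" by simp
      then show False using sig by simp
    qed
    then obtain k0 where "\<pi> k0 \<noteq> 0" by blast
    then have allpos: "\<And>k. \<pi> k > 0" using sc p0 unfolding s_def by (metis less_eq_real_def)
    have "death_rate p i = c" for i
    proof -
      have "death_rate p i * \<pi> i = (\<Sum>j\<in>UNIV. e i j * \<pi> j)" using bal[of i] dd by simp
      also have "\<dots> = (\<Sum>j\<in>UNIV. e i j * \<pi> i)"
      proof (rule sum.cong[OF refl])
        fix j
        show "e i j * \<pi> j = e i j * \<pi> i"
        proof (cases "e i j = 0")
          case False
          then have "e i j > 0" using e0[of i j] by simp
          then have "\<pi> i = \<pi> j" by (rule tight2[OF e0 p0 bal z allpos allpos])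
          then show ?thesis by simp
        qed simp
      qed
      also have "\<dots> = c * \<pi> i" by (simp add: sum_distrib_right[symmetric] bb)
      finally show ?thesis using allpos[of i] by simp
    qed
    then show "\<exists>c. \<forall>i. death_rate p i = c" by blast
  qed
  show ?thesis
    using fp_le cr_le fp_eq cr_eq iff unfolding N_def by simp
qed

end
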